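(* Let $K\ge 1$ and $M_\text{t}\ge 2$ be integers and let $P_\text{t}>0$, $P_\mathsf{max}>0$, $N_0>0$, $\tau>0$ and $\beta_1,\dots,\beta_K>0$. For a beacon power vector $\mathbf{p}=[p_1,\dots,p_K]^T$ with $0\le p_k\le P_\mathsf{max}$, define the harvested power of receiver $k$ by $$Q_k(\mathbf{p}) = P_\text{t}\beta_k + P_\text{t}\frac{p_k\beta_k^2(M_\text{t}-1)}{\sum_{l=1}^K p_l\beta_l + \frac{N_0}{\tau}},\qquad k=1,\dots,K,$$ and set $q_k(\mathbf{p}) = Q_k(\mathbf{p}) - P_\text{t}\beta_k$. Let targets $\bar Q_1,\dots,\bar Q_K$ satisfy $\bar Q_k\ge P_\text{t}\beta_k$ and put $\bar q_k=\bar Q_k-P_\text{t}\beta_k$. Starting from any initial vector $\mathbf{p}[1]$ with $0<p_k[1]\le P_\mathsf{max}$ for all $k$, consider the iteration $$p_k[n+1]=\min\left\{P_\mathsf{max},\ \frac{\bar q_k}{q_k(\mathbf{p}[n])}\,p_k[n]\right\},\qquad k=1,\dots,K,\ n\ge 1.$$ Then $\mathbf{p}[n]$ converges to a unique fixed-point solution $\mathbf{p}^\star=[p_1^\star,\dots,p_K^\star]^T$, such that every $k$ with $p_k^\star<P_\mathsf{max}$ satisfies $Q_k(\mathbf{p}^\star)=\bar Q_k$, and every $k$ with $p_k^\star=P_\mathsf{max}$ satisfies $Q_k(\mathbf{p}^\star)\le\bar Q_k$.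
   Context: Setting: an energy transmitter with $M_\text{t}$ antennas and total transmit power $P_\text{t}$ serves $K$ single-antenna energy receivers via retrodirective beamforming; receiver $k$ sends an uplink beacon of power $p_k\in[0,P_\mathsf{max}]$ for duration $\tau$, $N_0$ is the noise power spectral density, and $\beta_k$ is the large-scale channel attenuation of receiver $k$. The formula for $Q_k(\mathbf{p})$ above is the paper's (large-antenna) model of the power harvested by receiver $k$, and the iteration is the distributed beacon power update in which each receiver updates its beacon power once per block $n$. *)

theory Defs
  imports Complex_Main
begin

text \<open>Beacon power vectors are functions p :: nat => real, of which only the
components 1..K matter.\<close>

definition harvested :: "nat \<Rightarrow> nat \<Rightarrow> real \<Rightarrow> real \<Rightarrow> real \<Rightarrow> (nat \<Rightarrow> real)
    \<Rightarrow> (nat \<Rightarrow> real) \<Rightarrow> nat \<Rightarrow> real" where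
  "harvested K Mt Pt N0 tau beta p k =
     Pt * beta k + Pt * (p k * (beta k)^2 * (real Mt - 1))
                      / ((\<Sum>l=1..K. p l * beta l) + N0 / tau)"

definition excess :: "nat \<Rightarrow> nat \<Rightarrow> real \<Rightarrow> real \<Rightarrow> real \<Rightarrow> (nat \<Rightarrow> real)
    \<Rightarrow> (nat \<Rightarrow> real) \<Rightarrow> nat \<Rightarrow> real" where
  "excess K Mt Pt N0 tau beta p k = harvested K Mt Pt N0 tau beta p k - Pt * beta k"

text \<open>Fixed-point equation of the update, written via the (standard) interference
function q_bar_k * p_k / q_k(p) = q_bar_k (sum_l p_l beta_l + N0/tau) / (Pt beta_k^2 (Mt-1)),
which is the form of the update that is defined also at p_k = 0.\<close>

definition interf :: "nat \<Rightarrow> nat \<Rightarrow> real \<Rightarrow> real \<Rightarrow> real \<Rightarrow> (nat \<Rightarrow> real)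
    \<Rightarrow> (nat \<Rightarrow> real) \<Rightarrow> (nat \<Rightarrow> real) \<Rightarrow> nat \<Rightarrow> real" where
  "interf K Mt Pt N0 tau beta qbar p k =
     qbar k * ((\<Sum>l=1..K. p l * beta l) + N0 / tau) / (Pt * (beta k)^2 * (real Mt - 1))"

end

theory Submission
  imports Defs
begin

lemma min_cross:
  fixes P a u v :: real
  assumes "0 < u" "u \<le> v" "0 \<le> a" "0 < P"
  shows "min P (a*v) * u \<le> min P (a*u) * v"
proof (cases "a*u \<le> P")
  case True
  then have "min P (a*u) * v = a*u*v" by simp
  moreover have "min P (a*v) * u \<le> a*v*u" using assms by (intro mult_right_mono) auto
  ultimately show ?thesis by (metis mult.commute mult.left_commute)
next
  case False
  then have "min P (a*u) * v = P*v" by simp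
  moreover have "min P (a*v)*u \<le> P*u" using assms by (intro mult_right_mono) auto
  moreover have "P*u \<le> P*v" using assms by simp
  ultimately show ?thesis by linarith
qed

theorem theorem1:
  fixes K Mt :: nat and Pt Pmax N0 tau :: real
    and beta Qbar :: "nat \<Rightarrow> real" and p :: "nat \<Rightarrow> nat \<Rightarrow> real"
  assumes hK: "K \<ge> 1" and hM: "Mt \<ge> 2"
    and hPt: "Pt > 0" and hPmax: "Pmax > 0" and hN0: "N0 > 0" and htau: "tau > 0"
    and hbeta: "\<forall>k\<in>{1..K}. beta k > 0"
    and hQbar: "\<forall>k\<in>{1..K}. Qbar k \<ge> Pt * beta k"
    and hinit: "\<forall>k\<in>{1..K}. 0 < p 1 k \<and> p 1 k \<le> Pmax"
    and hiter: "\<forall>n\<ge>1. \<forall>k\<in>{1..K}. p (Suc n) k =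
        min Pmax ((Qbar k - Pt * beta k) / excess K Mt Pt N0 tau beta (p n) k * p n k)"
  shows "\<exists>pstar :: nat \<Rightarrow> real.
     (\<forall>k\<in>{1..K}. (\<lambda>n. p n k) \<longlonglongrightarrow> pstar k)
   \<and> (\<forall>k\<in>{1..K}. 0 \<le> pstar k \<and> pstar k \<le> Pmax)
   \<and> (\<forall>k\<in>{1..K}. pstar k =
        min Pmax ((Qbar k - Pt * beta k) / excess K Mt Pt N0 tau beta pstar k * pstar k))
   \<and> (\<forall>k\<in>{1..K}. pstar k =
        min Pmax (interf K Mt Pt N0 tau beta (\<lambda>j. Qbar j - Pt * beta j) pstar k))
   \<and> (\<forall>p'. (\<forall>k\<in>{1..K}. 0 \<le> p' k \<and> p' k \<le> Pmax) \<and>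
          (\<forall>k\<in>{1..K}. p' k =
             min Pmax (interf K Mt Pt N0 tau beta (\<lambda>j. Qbar j - Pt * beta j) p' k))
          \<longrightarrow> (\<forall>k\<in>{1..K}. p' k = pstar k))
   \<and> (\<forall>k\<in>{1..K}. pstar k < Pmax \<longrightarrow> harvested K Mt Pt N0 tau beta pstar k = Qbar k)
   \<and> (\<forall>k\<in>{1..K}. pstar k = Pmax \<longrightarrow> harvested K Mt Pt N0 tau beta pstar k \<le> Qbar k)"
proof -
  define c where "c = N0/tau"
  define m where "m = real Mt - 1"
  define A where "A = (\<lambda>k. (Qbar k - Pt * beta k) / (Pt * (beta k)^2 * m))"
  define S where "S = (\<lambda>q::nat\<Rightarrow>real. \<Sum>l=1..K. q l * beta l)"
  define g where "g = (\<lambda>s. \<Sum>l=1..K. min Pmax (A l * (s + c)) * beta l)"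
  have hc: "c > 0" using hN0 htau by (simp add: c_def)
  have "real Mt \<ge> 2" using hM by simp
  then have hm: "m \<ge> 1" by (simp add: m_def)
  have hqb: "\<And>k. k\<in>{1..K} \<Longrightarrow> Qbar k - Pt * beta k \<ge> 0" using hQbar by auto
  have hb: "\<And>k. k\<in>{1..K} \<Longrightarrow> beta k > 0" using hbeta by auto
  have hb0: "\<And>k. k\<in>{1..K} \<Longrightarrow> beta k \<ge> 0" using hb less_imp_le by blast
  have hA: "\<And>k. k\<in>{1..K} \<Longrightarrow> A k \<ge> 0"
    unfolding A_def using hqb hb hPt hm by (auto intro!: divide_nonneg_pos)
  have hApos: "\<And>k. k\<in>{1..K} \<Longrightarrow> Qbar k - Pt * beta k > 0 \<Longrightarrow> A k > 0"
  proof -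
    fix k assume k: "k\<in>{1..K}" and q: "Qbar k - Pt * beta k > 0"
    have "0 < Pt * (beta k)^2 * m" using hb[OF k] hPt hm by simp
    then show "A k > 0" unfolding A_def using q by simp
  qed
  have interf_eq: "\<And>q k. interf K Mt Pt N0 tau beta (\<lambda>j. Qbar j - Pt * beta j) q k = A k * (S q + c)"
    by (simp add: interf_def A_def S_def c_def m_def)
  have harv_eq: "\<And>q k. harvested K Mt Pt N0 tau beta q k
      = Pt*beta k + Pt*(q k * (beta k)^2 * m)/(S q + c)"
    by (simp add: harvested_def S_def c_def m_def)
  have exc_eq: "\<And>q k. excess K Mt Pt N0 tau beta q k = Pt*(q k*(beta k)^2*m)/(S q + c)"
    by (simp add: excess_def harv_eq)
  have S_nonneg: "\<And>q. (\<forall>k\<in>{1..K}. 0 \<le> q k) \<Longrightarrow> 0 \<le> S q"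
    unfolding S_def using hb by (intro sum_nonneg) (simp add: less_imp_le)
  have upd: "(Qbar k - Pt * beta k) / excess K Mt Pt N0 tau beta q k * q k = A k*(S q + c)"
    if k: "k\<in>{1..K}" and nn: "\<forall>l\<in>{1..K}. 0 \<le> q l"
      and pos: "Qbar k - Pt * beta k > 0 \<longrightarrow> q k > 0" for q k
  proof -
    have D: "S q + c > 0" using S_nonneg[OF nn] hc by linarith
    have b: "beta k > 0" using hb k by auto
    show ?thesis
    proof (cases "q k > 0")
      case True
      then show ?thesis using D b hPt hm unfolding exc_eq A_def by (simp add: field_simps)
    next
      case False
      then have "Qbar k - Pt * beta k = 0" using pos hqb[OF k] by force
      then show ?thesis by (simp add: A_def)
    qed
  qed
  define inv where "inv = (\<lambda>q::nat\<Rightarrow>real. \<forall>k\<in>{1..K}. 0 \<le> q k \<and> q k \<le> Pmax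
       \<and> (Qbar k - Pt * beta k > 0 \<longrightarrow> q k > 0))"
  have Tinv: "inv q" if "\<forall>k\<in>{1..K}. q k = min Pmax (A k * (s + c))" "0 \<le> s" for q s
    unfolding inv_def
  proof
    fix k assume k: "k \<in> {1..K}"
    have "0 \<le> A k * (s + c)" using hA[OF k] that(2) hc by simp
    moreover have "Qbar k - Pt * beta k > 0 \<longrightarrow> 0 < A k * (s + c)"
      using hApos[OF k] that(2) hc by simp
    ultimately show "0 \<le> q k \<and> q k \<le> Pmax \<and> (Qbar k - Pt * beta k > 0 \<longrightarrow> q k > 0)"
      using that(1) k hPmax by auto
  qed
  have inv_all: "inv (p (Suc n))" for n
  proof (induct n)
    case 0
    then show ?case using hinit unfolding inv_def by auto
  next
    case (Suc n)
    have "\<forall>k\<in>{1..K}. p (Suc (Suc n)) k = min Pmax (A k*(S (p (Suc n))+c))"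
    proof
      fix k assume k: "k \<in> {1..K}"
      have "p (Suc (Suc n)) k = min Pmax ((Qbar k - Pt * beta k) / excess K Mt Pt N0 tau beta (p (Suc n)) k * p (Suc n) k)"
        using hiter k by auto
      also have "\<dots> = min Pmax (A k*(S (p (Suc n))+c))"
        using upd[OF k] Suc k unfolding inv_def by auto
      finally show "p (Suc (Suc n)) k = min Pmax (A k*(S (p (Suc n))+c))" .
    qed
    moreover have "0 \<le> S (p (Suc n))" using S_nonneg Suc unfolding inv_def by auto
    ultimately show ?case using Tinv by blast
  qed
  have step: "p (Suc (Suc n)) k = min Pmax (A k*(S (p (Suc n))+c))" if k: "k\<in>{1..K}" for n k
  proof -
    have "p (Suc (Suc n)) k = min Pmax ((Qbar k - Pt * beta k) / excess K Mt Pt N0 tau beta (p (Suc n)) k * p (Suc n) k)"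
      using hiter k by auto
    also have "\<dots> = min Pmax (A k*(S (p (Suc n))+c))"
      using upd[OF k] inv_all[of n] k unfolding inv_def by auto
    finally show ?thesis .
  qed
  define s where "s = (\<lambda>n. S (p (Suc n)))"
  have s_nn: "0 \<le> s n" for n using S_nonneg inv_all[of n] unfolding inv_def s_def by auto
  define B where "B = (\<Sum>l=1..K. Pmax * beta l)"
  have s_le: "s n \<le> B" for n
    unfolding s_def S_def B_def using inv_all[of n] hb0 unfolding inv_def
    by (auto intro!: sum_mono mult_right_mono)
  have s_step: "s (Suc n) = g (s n)" for n
  proof -
    have Sapp: "\<And>q. S q = (\<Sum>l=1..K. q l * beta l)" by (simp add: S_def)
    show ?thesis unfolding s_def g_def Sapp[of "p (Suc (Suc n))"]
      using step by (auto intro!: sum.cong)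
  qed
  have g_mono: "g x \<le> g y" if "x \<le> y" for x y
    unfolding g_def using hA hb0 that
    by (auto intro!: sum_mono mult_right_mono min.mono mult_left_mono)
  have mono: "monoseq s"
  proof (cases "s 0 \<le> s 1")
    case True
    have "s n \<le> s (Suc n)" for n
    proof (induct n)
      case 0 then show ?case using True by simp
    next
      case (Suc n) then show ?case using s_step g_mono by metis
    qed
    then show ?thesis unfolding monoseq_Suc by blast
  next
    case False
    have "s (Suc n) \<le> s n" for n
    proof (induct n)
      case 0 then show ?case using False by simp
    next
      case (Suc n) then show ?case using s_step g_mono by metis
    qed
    then show ?thesis unfolding monoseq_Suc by blast
  qed
  have "Bseq s"
    by (rule BseqI'[where K=B]) (use s_nn s_le in auto)
  then have "convergent s" using mono Bseq_monoseq_convergent by blast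
  then obtain L where L: "s \<longlonglongrightarrow> L" unfolding convergent_def by blast
  have "(\<lambda>n. g (s n)) \<longlonglongrightarrow> g L" unfolding g_def by (intro tendsto_intros L)
  then have "(\<lambda>n. s (Suc n)) \<longlonglongrightarrow> g L" using s_step by simp
  moreover have "(\<lambda>n. s (Suc n)) \<longlonglongrightarrow> L" using L by (rule LIMSEQ_Suc)
  ultimately have gL: "g L = L" using LIMSEQ_unique by blast
  have L0: "0 \<le> L" using L s_nn by (intro LIMSEQ_le_const) auto
  define pstar where "pstar = (\<lambda>k. min Pmax (A k * (L + c)))"
  have SL: "S pstar = L" using gL unfolding S_def g_def pstar_def by simp
  have pinv: "inv pstar" using Tinv[of pstar L] L0 unfolding pstar_def by auto
  have conv: "(\<lambda>n. p n k) \<longlonglongrightarrow> pstar k" if k: "k\<in>{1..K}" for k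
  proof -
    have "(\<lambda>n. min Pmax (A k*(s n + c))) \<longlonglongrightarrow> pstar k"
      unfolding pstar_def by (intro tendsto_intros L)
    then have "(\<lambda>n. p (Suc (Suc n)) k) \<longlonglongrightarrow> pstar k"
      using step[OF k] unfolding s_def by simp
    then have "(\<lambda>n. p (Suc n) k) \<longlonglongrightarrow> pstar k"
      by (rule LIMSEQ_imp_Suc)
    then show ?thesis by (rule LIMSEQ_imp_Suc)
  qed
  have bounds: "\<forall>k\<in>{1..K}. 0 \<le> pstar k \<and> pstar k \<le> Pmax" using pinv unfolding inv_def by auto
  have fix1: "\<forall>k\<in>{1..K}. pstar k =
        min Pmax ((Qbar k - Pt * beta k) / excess K Mt Pt N0 tau beta pstar k * pstar k)"
  proof
    fix k assume k: "k\<in>{1..K}"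
    have "(Qbar k - Pt * beta k) / excess K Mt Pt N0 tau beta pstar k * pstar k = A k * (L + c)"
    proof -
      have "(Qbar k - Pt * beta k) / excess K Mt Pt N0 tau beta pstar k * pstar k = A k * (S pstar + c)"
      proof (rule upd[OF k])
        show "\<forall>l\<in>{1..K}. 0 \<le> pstar l" using pinv unfolding inv_def by blast
        show "Qbar k - Pt * beta k > 0 \<longrightarrow> pstar k > 0" using pinv k unfolding inv_def by blast
      qed
      then show ?thesis using SL by simp
    qed
    then show "pstar k = min Pmax ((Qbar k - Pt * beta k) / excess K Mt Pt N0 tau beta pstar k * pstar k)"
      unfolding pstar_def by simp
  qed
  have fix2: "\<forall>k\<in>{1..K}. pstar k =
        min Pmax (interf K Mt Pt N0 tau beta (\<lambda>j. Qbar j - Pt * beta j) pstar k)"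
    using SL by (simp add: interf_eq pstar_def)
  have uniqg: "y \<le> x" if "0\<le>x" "0\<le>y" "g x = x" "g y = y" "x \<le> y" for x y
  proof -
    have "g y * (x + c) \<le> g x * (y + c)"
      unfolding g_def sum_distrib_right
    proof (rule sum_mono)
      fix l assume l: "l \<in> {1..K}"
      have "min Pmax (A l*(y+c))*(x+c)*beta l \<le> min Pmax (A l*(x+c))*(y+c)*beta l"
        by (rule mult_right_mono[OF min_cross]) (use that hc hA[OF l] hb[OF l] hPmax in auto)
      then show "min Pmax (A l * (y + c)) * beta l * (x + c) \<le> min Pmax (A l * (x + c)) * beta l * (y + c)"
        by (simp add: algebra_simps)
    qed
    then have "y * c \<le> x * c" using that by (simp add: algebra_simps)
    then show ?thesis using hc by simp
  qed
  have uniq: "\<forall>p'. (\<forall>k\<in>{1..K}. 0 \<le> p' k \<and> p' k \<le> Pmax) \<and>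
          (\<forall>k\<in>{1..K}. p' k =
             min Pmax (interf K Mt Pt N0 tau beta (\<lambda>j. Qbar j - Pt * beta j) p' k))
          \<longrightarrow> (\<forall>k\<in>{1..K}. p' k = pstar k)"
  proof (intro allI impI)
    fix p' assume H: "(\<forall>k\<in>{1..K}. 0 \<le> p' k \<and> p' k \<le> Pmax) \<and>
          (\<forall>k\<in>{1..K}. p' k =
             min Pmax (interf K Mt Pt N0 tau beta (\<lambda>j. Qbar j - Pt * beta j) p' k))"
    then have fx: "\<forall>k\<in>{1..K}. p' k = min Pmax (A k * (S p' + c))" by (simp add: interf_eq)
    have S0: "0 \<le> S p'" using S_nonneg H by auto
    have Sapp: "S p' = (\<Sum>l=1..K. p' l * beta l)" by (simp add: S_def)
    have "(\<Sum>l=1..K. p' l * beta l) = (\<Sum>l=1..K. min Pmax (A l * (S p' + c)) * beta l)"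
      by (rule sum.cong) (use fx in auto)
    then have gS: "g (S p') = S p'" unfolding g_def using Sapp by simp
    have "S p' = L"
    proof (cases "S p' \<le> L")
      case True then show ?thesis using uniqg[OF S0 L0 gS gL] by simp
    next
      case False then show ?thesis using uniqg[OF L0 S0 gL gS] by simp
    qed
    then show "\<forall>k\<in>{1..K}. p' k = pstar k" using fx unfolding pstar_def by metis
  qed
  have h1: "\<forall>k\<in>{1..K}. pstar k < Pmax \<longrightarrow> harvested K Mt Pt N0 tau beta pstar k = Qbar k"
  proof (intro ballI impI)
    fix k assume k: "k\<in>{1..K}" and lt: "pstar k < Pmax"
    then have e: "pstar k = A k * (L + c)" unfolding pstar_def by (auto simp: min_def split: if_splits)
    show "harvested K Mt Pt N0 tau beta pstar k = Qbar k"
    proof -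
      have d1: "Pt * (beta k)^2 * m \<noteq> 0" using hb[OF k] hPt hm by simp
      have d2: "L + c \<noteq> 0" using hc L0 by simp
      have "Pt*(A k*(L+c)*(beta k)^2*m)/(L+c) = A k * (Pt * (beta k)^2 * m)"
        using d2 by (simp add: field_simps)
      also have "\<dots> = Qbar k - Pt * beta k" unfolding A_def using d1 by simp
      finally show ?thesis unfolding harv_eq SL e by simp
    qed
  qed
  have h2: "\<forall>k\<in>{1..K}. pstar k = Pmax \<longrightarrow> harvested K Mt Pt N0 tau beta pstar k \<le> Qbar k"
  proof (intro ballI impI)
    fix k assume k: "k\<in>{1..K}" and eq: "pstar k = Pmax"
    then have "Pmax \<le> A k * (L + c)" unfolding pstar_def by (auto simp: min_def split: if_splits)
    then have "Pmax \<le> (Qbar k - Pt * beta k) * (L + c) / (Pt * (beta k)^2 * m)"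
      unfolding A_def by simp
    then have "Pmax * (Pt * (beta k)^2 * m) \<le> (Qbar k - Pt * beta k) * (L + c)"
      using hb[OF k] hPt hm by (simp add: pos_le_divide_eq)
    then have "Pt*(Pmax * (beta k)^2 * m)/(L + c) \<le> Qbar k - Pt * beta k"
    proof -
      assume a: "Pmax * (Pt * (beta k)^2 * m) \<le> (Qbar k - Pt * beta k) * (L + c)"
      have "0 < L + c" using hc L0 by simp
      then show ?thesis using a by (simp add: pos_divide_le_eq mult.commute mult.left_commute)
    qed
    then show "harvested K Mt Pt N0 tau beta pstar k \<le> Qbar k"
      unfolding harv_eq SL eq by simp
  qed
  have convA: "\<forall>k\<in>{1..K}. (\<lambda>n. p n k) \<longlonglongrightarrow> pstar k" using conv by blast
  show ?thesis
    by (rule exI[of _ pstar]) (intro conjI convA bounds fix1 fix2 uniq h1 h2)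
qed

end
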